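(* Let $a,q,\alpha,\beta,\gamma,\delta\in\mathbb{C}$ with $a\neq 0$ and $\gamma\notin\{0,-1,-2,\dots\}$, and set $\varepsilon=\alpha+\beta-\gamma-\delta+1$. Let $(d_n)_{n\ge0}$ be defined by $d_0=1$, $d_1=\frac{q}{a\gamma}$, and for $n\ge1$ $$d_{n+1}=\frac{(1+a)n^2+\big(\gamma+\varepsilon-1+a(\gamma+\delta-1)\big)n+q}{a(n+1)(n+\gamma)}\,d_n-\frac{(n-1+\alpha)(n-1+\beta)}{a(n+1)(n+\gamma)}\,d_{n-1},$$ so that $y(x)=\sum_{n\ge0}d_nx^n$ is the formal power-series solution at $x=0$ (exponent $0$) of Heun's equation $$y''+\Big(\frac{\gamma}{x}+\frac{\delta}{x-1}+\frac{\varepsilon}{x-a}\Big)y'+\frac{\alpha\beta x-q}{x(x-1)(x-a)}\,y=0.$$ Then $\sum_{n\ge0}d_nx^n$ converges absolutely for every $x\in\mathbb{C}$ satisfying $$\left|\frac{1+a}{a}\,x\right|+\left|\frac{1}{a}\,x^2\right|<1.$$ *)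

theory Defs
  imports "HOL-Analysis.Analysis"
begin

fun heun_coeff :: "complex \<Rightarrow> complex \<Rightarrow> complex \<Rightarrow> complex \<Rightarrow> complex \<Rightarrow> complex \<Rightarrow> nat \<Rightarrow> complex" where
  "heun_coeff a q \<alpha> \<beta> \<gamma> \<delta> 0 = 1"
| "heun_coeff a q \<alpha> \<beta> \<gamma> \<delta> (Suc 0) = q / (a * \<gamma>)"
| "heun_coeff a q \<alpha> \<beta> \<gamma> \<delta> (Suc (Suc m)) =
     (let n = of_nat (Suc m) :: complex;
          \<epsilon> = \<alpha> + \<beta> - \<gamma> - \<delta> + 1
      in ((1 + a) * n^2 + (\<gamma> + \<epsilon> - 1 + a * (\<gamma> + \<delta> - 1)) * n + q)
           / (a * (n + 1) * (n + \<gamma>)) * heun_coeff a q \<alpha> \<beta> \<gamma> \<delta> (Suc m)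
         - ((n - 1 + \<alpha>) * (n - 1 + \<beta>)) / (a * (n + 1) * (n + \<gamma>))
           * heun_coeff a q \<alpha> \<beta> \<gamma> \<delta> m)"

end

theory Submission
  imports Defs
begin

lemma lim_c:
  fixes a K q \<gamma> :: complex
  assumes "a \<noteq> 0"
  shows "(\<lambda>k. ((1+a)*(of_nat k)^2 + K * of_nat k + q)/(a*(of_nat k+1)*(of_nat k+\<gamma>)))
          \<longlonglongrightarrow> (1+a)/a"
proof -
  let ?i = "\<lambda>k. inverse (of_nat k :: complex)"
  have i: "?i \<longlonglongrightarrow> 0" by (rule lim_inverse_n)
  have "(\<lambda>k. ((1+a) + K * ?i k + q*(?i k)^2)/(a*(1+?i k)*(1+\<gamma> * ?i k)))
          \<longlonglongrightarrow> ((1+a) + K*0 + q*0^2)/(a*(1+0)*(1+\<gamma>*0))"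
    by (intro tendsto_intros i) (use assms in auto)
  hence L: "(\<lambda>k. ((1+a) + K * ?i k + q*(?i k)^2)/(a*(1+?i k)*(1+\<gamma> * ?i k))) \<longlonglongrightarrow> (1+a)/a"
    by simp
  show ?thesis
  proof (rule Lim_transform_eventually[OF L])
    show "\<forall>\<^sub>F k in sequentially. ((1+a) + K * ?i k + q*(?i k)^2)/(a*(1+?i k)*(1+\<gamma> * ?i k)) =
       ((1+a)*(of_nat k)^2 + K * of_nat k + q)/(a*(of_nat k+1)*(of_nat k+\<gamma>))"
      using eventually_gt_at_top[of "0::nat"]
    proof eventually_elim
      case (elim k)
      hence k: "(of_nat k :: complex) \<noteq> 0" by simp
      have e1: "(1+a) + K * ?i k + q*(?i k)^2 = ((1+a)*(of_nat k)^2 + K * of_nat k + q) / (of_nat k)^2"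
        using k by (simp add: field_simps power2_eq_square)
      have e2: "a*(1+?i k)*(1+\<gamma> * ?i k) = (a*(of_nat k+1)*(of_nat k+\<gamma>)) / (of_nat k)^2"
        using k by (simp add: field_simps power2_eq_square)
      show ?case unfolding e1 e2 using k by simp
    qed
  qed
qed

lemma lim_e:
  fixes a \<alpha> \<beta> \<gamma> :: complex
  assumes "a \<noteq> 0"
  shows "(\<lambda>k. - ((of_nat k - 1 + \<alpha>)*(of_nat k - 1 + \<beta>))/(a*(of_nat k+1)*(of_nat k+\<gamma>)))
          \<longlonglongrightarrow> - 1/a"
proof -
  let ?i = "\<lambda>k. inverse (of_nat k :: complex)"
  have i: "?i \<longlonglongrightarrow> 0" by (rule lim_inverse_n)
  have "(\<lambda>k. - ((1 + (\<alpha>-1) * ?i k)*(1 + (\<beta>-1) * ?i k))/(a*(1+?i k)*(1+\<gamma> * ?i k)))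
          \<longlonglongrightarrow> - ((1 + (\<alpha>-1)*0)*(1 + (\<beta>-1)*0))/(a*(1+0)*(1+\<gamma>*0))"
    by (intro tendsto_intros i) (use assms in auto)
  hence L: "(\<lambda>k. - ((1 + (\<alpha>-1) * ?i k)*(1 + (\<beta>-1) * ?i k))/(a*(1+?i k)*(1+\<gamma> * ?i k))) \<longlonglongrightarrow> - 1/a"
    by simp
  show ?thesis
  proof (rule Lim_transform_eventually[OF L])
    show "\<forall>\<^sub>F k in sequentially. - ((1 + (\<alpha>-1) * ?i k)*(1 + (\<beta>-1) * ?i k))/(a*(1+?i k)*(1+\<gamma> * ?i k)) =
       - ((of_nat k - 1 + \<alpha>)*(of_nat k - 1 + \<beta>))/(a*(of_nat k+1)*(of_nat k+\<gamma>))"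
      using eventually_gt_at_top[of "0::nat"]
    proof eventually_elim
      case (elim k)
      hence k: "(of_nat k :: complex) \<noteq> 0" by simp
      have e1: "(1 + (\<alpha>-1) * ?i k)*(1 + (\<beta>-1) * ?i k) = ((of_nat k - 1 + \<alpha>)*(of_nat k - 1 + \<beta>)) / (of_nat k)^2"
        using k by (simp add: field_simps power2_eq_square)
      have e2: "a*(1+?i k)*(1+\<gamma> * ?i k) = (a*(of_nat k+1)*(of_nat k+\<gamma>)) / (of_nat k)^2"
        using k by (simp add: field_simps power2_eq_square)
      show ?case unfolding e1 e2 using k by simp
    qed
  qed
qed

theorem mainTheorem3:
  fixes a q \<alpha> \<beta> \<gamma> \<delta> x :: complex
  assumes "a \<noteq> 0"
    and "\<forall>k::nat. \<gamma> \<noteq> - of_nat k"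
    and "norm ((1 + a) / a * x) + norm (x^2 / a) < 1"
  shows "summable (\<lambda>n. norm (heun_coeff a q \<alpha> \<beta> \<gamma> \<delta> n * x ^ n))"
proof -
  define d where "d = heun_coeff a q \<alpha> \<beta> \<gamma> \<delta>"
  define K where "K = \<gamma> + (\<alpha> + \<beta> - \<gamma> - \<delta> + 1) - 1 + a * (\<gamma> + \<delta> - 1)"
  define c where "c = (\<lambda>k::nat. ((1+a)*(of_nat k)^2 + K * of_nat k + q)/(a*(of_nat k+1)*(of_nat k+\<gamma>)))"
  define e where "e = (\<lambda>k::nat. - ((of_nat k - 1 + \<alpha>)*(of_nat k - 1 + \<beta>))/(a*(of_nat k+1)*(of_nat k+\<gamma>)))"
  have rec: "d (Suc (Suc m)) = c (Suc m) * d (Suc m) + e (Suc m) * d m" for m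
    unfolding d_def c_def e_def K_def by (simp add: Let_def diff_divide_distrib)
  define A where "A = norm ((1+a)/a)"
  define B where "B = norm (1/a)"
  define r where "r = norm x"
  have r0: "r \<ge> 0" unfolding r_def by simp
  have A0: "A \<ge> 0" "B \<ge> 0" unfolding A_def B_def by auto
  have H: "A * r + B * r^2 < 1"
    using assms(3) unfolding A_def B_def r_def by (simp add: norm_mult norm_divide norm_power)
  define \<epsilon> where "\<epsilon> = (1 - A*r - B*r^2) / (2*(1+r+r^2))"
  have den: "2*(1+r+r^2) > 0" using r0 by (simp add: add_pos_nonneg)
  have eps0: "\<epsilon> > 0" unfolding \<epsilon>_def using H den by simp
  have epsb: "\<epsilon> * (r + r^2) < 1 - A*r - B*r^2"
  proof -
    have "\<epsilon> * (2*(1+r+r^2)) = 1 - A*r - B*r^2" unfolding \<epsilon>_def using den by simp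
    moreover have "\<epsilon> * (r + r^2) < \<epsilon> * (2*(1+r+r^2))"
      proof (rule mult_strict_left_mono[OF _ eps0])
      show "r + r^2 < 2*(1+r+r^2)" using r0 by (simp add: algebra_simps add_nonneg_pos add_pos_nonneg)
    qed
    ultimately show ?thesis by simp
  qed
  define p where "p = (A+\<epsilon>)*r"
  define s where "s = (B+\<epsilon>)*r^2"
  have p0: "p \<ge> 0" "s \<ge> 0" unfolding p_def s_def using A0 eps0 r0 by auto
  have ps: "p + s < 1" unfolding p_def s_def using epsb by (simp add: algebra_simps)
  define \<rho> where "\<rho> = sqrt ((1 + (p+s))/2)"
  have rho2: "\<rho>^2 = (1+(p+s))/2" unfolding \<rho>_def using p0 by simp
  have rho0: "\<rho> > 0" unfolding \<rho>_def using p0 by simp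
  have rho1: "\<rho> < 1" unfolding \<rho>_def using ps p0 by (simp add: real_sqrt_less_iff)
  have key: "p * \<rho> + s \<le> \<rho>^2"
  proof -
    have "p * \<rho> \<le> p" using p0 rho1 by (simp add: mult_left_le)
    thus ?thesis using rho2 ps by simp
  qed
  have evc: "\<forall>\<^sub>F k in sequentially. norm (c k) < A + \<epsilon>"
  proof -
    have "((\<lambda>k. norm (c k)) \<longlongrightarrow> A) sequentially"
      unfolding c_def A_def by (intro tendsto_norm lim_c assms(1))
    thus ?thesis using eps0 by (intro order_tendstoD) auto
  qed
  have eve: "\<forall>\<^sub>F k in sequentially. norm (e k) < B + \<epsilon>"
  proof -
    have "((\<lambda>k. norm (e k)) \<longlongrightarrow> norm (-1/a)) sequentially"
      unfolding e_def by (intro tendsto_norm lim_e assms(1))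
    hence "((\<lambda>k. norm (e k)) \<longlongrightarrow> B) sequentially"
      unfolding B_def by (simp add: norm_divide)
    thus ?thesis using eps0 by (intro order_tendstoD) auto
  qed
  from eventually_conj[OF evc eve] obtain N where
    N: "\<And>k. k \<ge> N \<Longrightarrow> norm (c k) < A + \<epsilon> \<and> norm (e k) < B + \<epsilon>"
    unfolding eventually_sequentially by blast
  define u where "u = (\<lambda>n. norm (d n) * r^n)"
  have u0: "u n \<ge> 0" for n unfolding u_def using r0 by simp
  have ustep: "u (Suc (Suc k)) \<le> p * u (Suc k) + s * u k" if "Suc k \<ge> N" for k
  proof -
    have cb: "norm (c (Suc k)) \<le> A + \<epsilon>" and eb: "norm (e (Suc k)) \<le> B + \<epsilon>"
      using N[OF that] by auto
    have "u (Suc (Suc k)) = norm (c (Suc k) * d (Suc k) + e (Suc k) * d k) * r^(Suc (Suc k))"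
      unfolding u_def rec ..
    also have "\<dots> \<le> (norm (c (Suc k)) * norm (d (Suc k)) + norm (e (Suc k)) * norm (d k)) * r^(Suc (Suc k))"
      by (intro mult_right_mono) (auto intro: norm_triangle_le simp: norm_mult r0)
    also have "\<dots> \<le> ((A + \<epsilon>) * norm (d (Suc k)) + (B + \<epsilon>) * norm (d k)) * r^(Suc (Suc k))"
      by (intro mult_right_mono add_mono mult_right_mono cb eb) (auto simp: r0)
    also have "\<dots> = p * u (Suc k) + s * u k"
      unfolding p_def s_def u_def by (simp add: algebra_simps power2_eq_square)
    finally show ?thesis .
  qed
  define m where "m = N"
  define M where "M = max (u m / \<rho>^m) (u (Suc m) / \<rho>^(Suc m))"
  have M0: "M \<ge> 0" unfolding M_def using u0 rho0 by (simp add: le_max_iff_disj)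
  have bnd: "u (m+n) \<le> M * \<rho>^(m+n) \<and> u (Suc (m+n)) \<le> M * \<rho>^(Suc (m+n))" for n
  proof (induction n)
    case 0
    have "u m / \<rho>^m \<le> M" "u (Suc m) / \<rho>^(Suc m) \<le> M" unfolding M_def by auto
    hence "u m \<le> M * \<rho>^m" "u (Suc m) \<le> M * \<rho>^(Suc m)"
      using rho0 by (simp_all only: pos_divide_le_eq zero_less_power)
    thus ?case by simp
  next
    case (Suc n)
    define k where "k = m + n"
    have IH: "u k \<le> M * \<rho>^k" "u (Suc k) \<le> M * \<rho>^(Suc k)" using Suc.IH unfolding k_def by auto
    have "u (Suc (Suc k)) \<le> p * u (Suc k) + s * u k" using ustep[of k] unfolding k_def m_def by simp
    also have "\<dots> \<le> p * (M * \<rho>^(Suc k)) + s * (M * \<rho>^k)"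
      using IH p0 by (intro add_mono mult_left_mono) auto
    also have "\<dots> = M * \<rho>^k * (p * \<rho> + s)" by (simp add: algebra_simps)
    also have "\<dots> \<le> M * \<rho>^k * \<rho>^2"
      using key M0 rho0 by (intro mult_left_mono) auto
    also have "\<dots> = M * \<rho>^(Suc (Suc k))" by (simp add: power2_eq_square algebra_simps)
    finally show ?case using IH unfolding k_def by simp
  qed
  have "summable (\<lambda>n. M * \<rho>^n)"
    using rho0 rho1 by (intro summable_mult summable_geometric) auto
  moreover have "norm (norm (d n * x^n)) \<le> M * \<rho>^n" if nm: "n \<ge> m" for n
  proof -
    obtain j where j: "n = m + j" using nm le_iff_add by blast
    have "u n \<le> M * \<rho>^n" using bnd[of j] unfolding j by blast
    moreover have "u n = norm (norm (d n * x^n))" unfolding u_def r_def by (simp add: norm_mult norm_power)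
    ultimately show ?thesis by simp
  qed
  ultimately show ?thesis unfolding d_def by (rule summable_comparison_test')
qed

end
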